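(* Let $G$ be a graph of order $n$. The following are equivalent: (1) every component of $G$ with at least two vertices is a corona; (2) $\gamma_{\rm cer}(G)=n$; (3) $\Gamma_{\rm cer}(G)=n$.
   Context: All graphs are finite and simple. A set $D\subseteq V_G$ is a dominating set of $G$ if every vertex of $V_G-D$ has a neighbor in $D$. A set $D$ is a certified dominating set of $G$ if $D$ is dominating and every vertex of $D$ has either zero or at least two neighbors in $V_G-D$; it is minimal if no proper subset is a certified dominating set. $\gamma_{\rm cer}(G)$ is the minimum cardinality of a certified dominating set, and $\Gamma_{\rm cer}(G)$ is the maximum cardinality of a minimal certified dominating set. A graph is a corona if it equals $H\circ K_1$ for some graph $H$, i.e., it is obtained from $H$ by attaching one new pendant vertex to each vertex of $H$. *)

theory Defs
  imports Main
begin

definition graph :: "'a set \<Rightarrow> ('a \<Rightarrow> 'a \<Rightarrow> bool) \<Rightarrow> bool" where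
  "graph V E \<longleftrightarrow> finite V \<and> (\<forall>x y. E x y \<longrightarrow> E y x) \<and> (\<forall>x. \<not> E x x)
     \<and> (\<forall>x y. E x y \<longrightarrow> x \<in> V \<and> y \<in> V)"

definition dominating :: "'a set \<Rightarrow> ('a \<Rightarrow> 'a \<Rightarrow> bool) \<Rightarrow> 'a set \<Rightarrow> bool" where
  "dominating V E D \<longleftrightarrow> D \<subseteq> V \<and> (\<forall>v \<in> V - D. \<exists>u \<in> D. E v u)"

definition certified_dominating :: "'a set \<Rightarrow> ('a \<Rightarrow> 'a \<Rightarrow> bool) \<Rightarrow> 'a set \<Rightarrow> bool" where
  "certified_dominating V E D \<longleftrightarrow> dominating V E D \<and>
     (\<forall>v \<in> D. card {u \<in> V - D. E v u} = 0 \<or> card {u \<in> V - D. E v u} \<ge> 2)"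

definition minimal_certified_dominating :: "'a set \<Rightarrow> ('a \<Rightarrow> 'a \<Rightarrow> bool) \<Rightarrow> 'a set \<Rightarrow> bool" where
  "minimal_certified_dominating V E D \<longleftrightarrow> certified_dominating V E D \<and>
     (\<forall>D'. D' \<subset> D \<longrightarrow> \<not> certified_dominating V E D')"

definition gamma_cer :: "'a set \<Rightarrow> ('a \<Rightarrow> 'a \<Rightarrow> bool) \<Rightarrow> nat" where
  "gamma_cer V E = Min (card ` {D. certified_dominating V E D})"

definition Gamma_cer :: "'a set \<Rightarrow> ('a \<Rightarrow> 'a \<Rightarrow> bool) \<Rightarrow> nat" where
  "Gamma_cer V E = Max (card ` {D. minimal_certified_dominating V E D})"

definition components :: "'a set \<Rightarrow> ('a \<Rightarrow> 'a \<Rightarrow> bool) \<Rightarrow> 'a set set" where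
  "components V E = (\<lambda>v. {u. E\<^sup>*\<^sup>* v u}) ` V"

definition induced :: "('a \<Rightarrow> 'a \<Rightarrow> bool) \<Rightarrow> 'a set \<Rightarrow> 'a \<Rightarrow> 'a \<Rightarrow> bool" where
  "induced E W = (\<lambda>x y. E x y \<and> x \<in> W \<and> y \<in> W)"

text \<open>(W,F) is a corona H o K1: there is a vertex set H \<subseteq> W (inducing the graph H)
  and a bijection p from H onto the remaining vertices such that each remaining vertex
  p h is adjacent exactly to h.\<close>
definition is_corona :: "'a set \<Rightarrow> ('a \<Rightarrow> 'a \<Rightarrow> bool) \<Rightarrow> bool" where
  "is_corona W F \<longleftrightarrow> (\<exists>H p. H \<subseteq> W \<and> bij_betw p H (W - H) \<and>
     (\<forall>x \<in> W - H. \<forall>y. F x y \<longleftrightarrow> (y \<in> H \<and> p y = x)))"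

end

theory Submission
  imports Defs
begin


definition lf :: "('a \<Rightarrow> 'a \<Rightarrow> bool) \<Rightarrow> 'a \<Rightarrow> bool" where
  "lf E x \<longleftrightarrow> (\<exists>y. {z. E x z} = {y})"

lemma lf_nb: "lf E x \<Longrightarrow> E x y \<Longrightarrow> {z. E x z} = {y}"
  unfolding lf_def by (metis (mono_tags) mem_Collect_eq singletonD)

lemma g_sym: "graph V E \<Longrightarrow> E x y \<Longrightarrow> E y x" unfolding graph_def by blast
lemma g_irr: "graph V E \<Longrightarrow> \<not> E x x" unfolding graph_def by blast
lemma g_V1: "graph V E \<Longrightarrow> E x y \<Longrightarrow> x \<in> V" unfolding graph_def by blast
lemma g_V2: "graph V E \<Longrightarrow> E x y \<Longrightarrow> y \<in> V" unfolding graph_def by blast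
lemma g_fin: "graph V E \<Longrightarrow> finite V" unfolding graph_def by blast

lemma cert_sub: "certified_dominating V E D \<Longrightarrow> D \<subseteq> V"
  unfolding certified_dominating_def dominating_def by blast

lemma cert_V: "certified_dominating V E V"
  unfolding certified_dominating_def dominating_def by simp

lemma cert_compl:
  assumes S: "S \<subseteq> V"
  shows "certified_dominating V E (V - S) \<longleftrightarrow>
    (\<forall>s\<in>S. \<exists>u\<in>V - S. E s u) \<and> (\<forall>v\<in>V - S. \<forall>x. {u\<in>S. E v u} \<noteq> {x})"
proof -
  have VS: "V - (V - S) = S" using S by auto
  have c: "(card {u\<in>S. E v u} = 0 \<or> card {u\<in>S. E v u} \<ge> 2) \<longleftrightarrow> \<not>(\<exists>x. {u\<in>S. E v u} = {x})" for v
    using card_1_singleton_iff[of "{u\<in>S. E v u}"] by auto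
  show ?thesis unfolding certified_dominating_def dominating_def VS using c by auto
qed

lemma gamma_iff:
  assumes g: "graph V E"
  shows "gamma_cer V E = card V \<longleftrightarrow> (\<forall>D. certified_dominating V E D \<longrightarrow> D = V)"
proof -
  have fin: "finite {D. certified_dominating V E D}"
    by (rule finite_subset[of _ "Pow V"]) (auto dest: cert_sub simp: g_fin[OF g])
  show ?thesis
  proof
    assume m: "gamma_cer V E = card V"
    show "\<forall>D. certified_dominating V E D \<longrightarrow> D = V"
    proof (intro allI impI)
      fix D assume d: "certified_dominating V E D"
      show "D = V"
      proof (rule ccontr)
        assume "D \<noteq> V"
        then have "D \<subset> V" using cert_sub[OF d] by auto
        then have "card D < card V" using psubset_card_mono g_fin[OF g] by blast
        moreover have "gamma_cer V E \<le> card D" unfolding gamma_cer_def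
          using fin d by (intro Min_le) auto
        ultimately show False using m by simp
      qed
    qed
  next
    assume P: "\<forall>D. certified_dominating V E D \<longrightarrow> D = V"
    have "{D. certified_dominating V E D} = {V}" using P cert_V by blast
    then show "gamma_cer V E = card V" unfolding gamma_cer_def by simp
  qed
qed

lemma Gamma_iff:
  assumes g: "graph V E"
  shows "Gamma_cer V E = card V \<longleftrightarrow> (\<forall>D. certified_dominating V E D \<longrightarrow> D = V)"
proof -
  have fin: "finite {D. certified_dominating V E D}"
    by (rule finite_subset[of _ "Pow V"]) (auto dest: cert_sub simp: g_fin[OF g])
  have finM: "finite {D. minimal_certified_dominating V E D}"
    by (rule finite_subset[of _ "Pow V"]) (auto dest: cert_sub simp: g_fin[OF g] minimal_certified_dominating_def)
  show ?thesis
  proof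
    assume m: "Gamma_cer V E = card V"
    obtain D0 where D0: "certified_dominating V E D0" "card D0 = Min (card ` {D. certified_dominating V E D})"
      using Min_in[of "card ` {D. certified_dominating V E D}"] fin cert_V[of V E] by fastforce
    have "minimal_certified_dominating V E D0"
      unfolding minimal_certified_dominating_def
    proof (intro conjI allI impI D0(1))
      fix D' assume "D' \<subset> D0"
      then have "card D' < card D0" using psubset_card_mono finite_subset[OF cert_sub[OF D0(1)] g_fin[OF g]] by blast
      then show "\<not> certified_dominating V E D'"
      proof (intro notI)
        assume "card D' < card D0" "certified_dominating V E D'"
        then have "card D' \<in> card ` {D. certified_dominating V E D}" by blast
        then have "Min (card ` {D. certified_dominating V E D}) \<le> card D'" using fin by simp
        then show False using D0(2) \<open>card D' < card D0\<close> by simp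
      qed
    qed
    then have ne: "card ` {D. minimal_certified_dominating V E D} \<noteq> {}" by blast
    obtain D where D: "minimal_certified_dominating V E D" "card D = card V"
      using Max_in[OF finite_imageI[OF finM] ne] m unfolding Gamma_cer_def by auto
    have DsV: "D \<subseteq> V" using D(1) cert_sub unfolding minimal_certified_dominating_def by blast
    have DV: "D = V" using card_subset_eq[OF g_fin[OF g] DsV] D(2) by simp
    show "\<forall>D. certified_dominating V E D \<longrightarrow> D = V"
    proof (intro allI impI)
      fix D' assume d': "certified_dominating V E D'"
      have "D' \<subseteq> V" using cert_sub[OF d'] .
      then show "D' = V" using D(1) d' unfolding DV minimal_certified_dominating_def by blast
    qed
  next
    assume P: "\<forall>D. certified_dominating V E D \<longrightarrow> D = V"
    have "{D. minimal_certified_dominating V E D} = {V}"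
      using P cert_V unfolding minimal_certified_dominating_def by blast
    then show "Gamma_cer V E = card V" unfolding Gamma_cer_def by simp
  qed
qed



lemma rtr_sym:
  assumes g: "graph V E" and r: "E\<^sup>*\<^sup>* a b" shows "E\<^sup>*\<^sup>* b a"
  using r
proof (induction rule: rtranclp_induct)
  case base then show ?case by simp
next
  case (step y z)
  have "E z y" using g_sym[OF g step(2)] .
  then show ?case using step(3) by (rule converse_rtranclp_into_rtranclp)
qed

lemma rtr_V:
  assumes g: "graph V E" and r: "E\<^sup>*\<^sup>* a b" and a: "a \<in> V" shows "b \<in> V"
  using r
proof (induction rule: rtranclp_induct)
  case base then show ?case using a by simp
next
  case (step y z) then show ?case using g_V2[OF g] by blast
qed

lemma corona_P:
  assumes g: "graph V E"
    and cor: "\<forall>C \<in> components V E. card C \<ge> 2 \<longrightarrow> is_corona C (induced E C)"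
    and cd: "certified_dominating V E D"
  shows "D = V"
proof (rule ccontr)
  assume "D \<noteq> V"
  then obtain v where v: "v \<in> V" "v \<notin> D" using cert_sub[OF cd] by blast
  obtain u where u: "u \<in> D" "E v u" using cd v unfolding certified_dominating_def dominating_def by blast
  define C where "C = {x. E\<^sup>*\<^sup>* v x}"
  have Ccomp: "C \<in> components V E" unfolding components_def C_def using v by blast
  have CV: "C \<subseteq> V" unfolding C_def using rtr_V[OF g _ v(1)] by blast
  have finC: "finite C" using CV g_fin[OF g] finite_subset by blast
  have vC: "v \<in> C" unfolding C_def by simp
  have clos: "x \<in> C \<Longrightarrow> E x y \<Longrightarrow> y \<in> C" for x y unfolding C_def by auto
  have uC: "u \<in> C" using clos[OF vC u(2)] .
  have "u \<noteq> v" using u v by blast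
  then have "card {v, u} = 2" by simp
  moreover have "{v,u} \<subseteq> C" using vC uC by blast
  ultimately have "card C \<ge> 2" using card_mono[OF finC, of "{v,u}"] by linarith
  then have "is_corona C (induced E C)" using cor Ccomp by blast
  then obtain H p where H: "H \<subseteq> C" "bij_betw p H (C - H)"
    and cond: "\<forall>x \<in> C - H. \<forall>y. induced E C x y \<longleftrightarrow> (y \<in> H \<and> p y = x)"
    unfolding is_corona_def by blast
  have Nl: "E x y \<longleftrightarrow> (y \<in> H \<and> p y = x)" if x: "x \<in> C - H" for x y
  proof -
    have c: "induced E C x y \<longleftrightarrow> (y \<in> H \<and> p y = x)" using cond x by blast
    have "induced E C x y \<longleftrightarrow> E x y" using x clos[of x y] H(1) unfolding induced_def by auto
    then show ?thesis using c by simp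
  qed
  have inj: "inj_on p H" using H(2) bij_betw_imp_inj_on by blast
  have noH: False if w: "w \<in> H" "w \<notin> D" for w
  proof -
    have pw: "p w \<in> C - H" using bij_betw_apply[OF H(2) w(1)] .
    have N: "E (p w) y \<longleftrightarrow> y = w" for y
    proof
      assume "E (p w) y"
      then have "y \<in> H" "p y = p w" using Nl[OF pw, of y] by auto
      then show "y = w" using inj w(1) unfolding inj_on_def by blast
    next
      assume "y = w" then show "E (p w) y" using Nl[OF pw, of y] w(1) by simp
    qed
    have wV: "w \<in> V" using w(1) H(1) CV by blast
    show False
    proof (cases "p w \<in> D")
      case False
      then obtain z where "z \<in> D" "E (p w) z" using cd pw CV unfolding certified_dominating_def dominating_def by blast
      then show False using N[of z] w by auto
    next
      case True
      have "{y \<in> V - D. E (p w) y} = {w}" using N w wV by auto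
      then have "card {y \<in> V - D. E (p w) y} = 1" by simp
      moreover have "card {y \<in> V - D. E (p w) y} = 0 \<or> card {y \<in> V - D. E (p w) y} \<ge> 2"
        using cd True unfolding certified_dominating_def by blast
      ultimately show False by simp
    qed
  qed
  show False
  proof (cases "v \<in> H")
    case True then show False using noH v by blast
  next
    case False
    then have vCH: "v \<in> C - H" using vC by blast
    have uH: "u \<in> H" "p u = v" using Nl[OF vCH, of u] u by auto
    define Z where "Z = {y \<in> V - D. E u y}"
    have vZ: "v \<in> Z" unfolding Z_def using v u g_sym[OF g] by blast
    have finZ: "finite Z" unfolding Z_def using g_fin[OF g] by simp
    have "card Z = 0 \<or> card Z \<ge> 2" using cd u(1) unfolding certified_dominating_def Z_def by blast
    moreover have "card Z \<noteq> 0" using vZ finZ by auto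
    ultimately have "card Z \<ge> 2" by simp
    then obtain w where w: "w \<in> Z" "w \<noteq> v"
    proof -
      assume a: "\<And>w. w \<in> Z \<Longrightarrow> w \<noteq> v \<Longrightarrow> thesis"
      show thesis
      proof (rule ccontr)
        assume "\<not> thesis"
        then have "Z \<subseteq> {v}" using a by blast
        then have "card Z \<le> 1" using card_mono[of "{v}" Z] by simp
        then show False using \<open>card Z \<ge> 2\<close> by simp
      qed
    qed
    have wC: "w \<in> C" using clos[OF uC] w unfolding Z_def by blast
    have "w \<in> H"
    proof (rule ccontr)
      assume "w \<notin> H"
      then have "w \<in> C - H" using wC by blast
      moreover have "E w u" using w g_sym[OF g] unfolding Z_def by blast
      ultimately have "p u = w" using Nl by blast
      then show False using uH w by simp
    qed
    then show False using noH w unfolding Z_def by blast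
  qed
qed

lemma two_leaves:
  assumes g: "graph V E" and e: "E v a" "E v b" "a \<noteq> b" "lf E a" "lf E b"
  shows "certified_dominating V E (V - {a,b})"
proof -
  have S: "{a,b} \<subseteq> V" using e g_V2[OF g] by blast
  have va: "v \<noteq> a" "v \<noteq> b" using e g_irr[OF g] by auto
  have vV: "v \<in> V" using g_V1[OF g e(1)] .
  have Na: "{z. E a z} = {v}" using lf_nb[OF e(4) g_sym[OF g e(1)]] .
  have Nb: "{z. E b z} = {v}" using lf_nb[OF e(5) g_sym[OF g e(2)]] .
  have A: "\<forall>s\<in>{a,b}. \<exists>u\<in>V - {a,b}. E s u" using Na Nb va vV by auto
  have B: "\<forall>w\<in>V - {a,b}. \<forall>x. {u\<in>{a,b}. E w u} \<noteq> {x}"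
  proof (intro ballI allI notI)
    fix w x assume w: "w \<in> V - {a,b}" and eq: "{u\<in>{a,b}. E w u} = {x}"
    show False
    proof (cases "w = v")
      case True
      then have "a \<in> {x}" "b \<in> {x}" using eq e by blast+
      then show False using e(3) by simp
    next
      case False
      have "x \<in> {a,b}" "E w x" using eq by blast+
      then have "E x w" using g_sym[OF g] by blast
      then show False using Na Nb False \<open>x \<in> {a,b}\<close> by blast
    qed
  qed
  show ?thesis using cert_compl[OF S] A B by blast
qed



lemma two_elems:
  assumes "{z. E s z} \<noteq> {}" "\<not> lf E s"
  obtains a c where "E s a" "E s c" "a \<noteq> c"
proof -
  obtain a where a: "E s a" using assms(1) by blast
  have "{z. E s z} \<noteq> {a}" using assms(2) unfolding lf_def by blast
  then obtain c where "E s c" "c \<noteq> a" using a by blast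
  then show ?thesis using that a by blast
qed

lemma B_constr:
  assumes g: "graph V E" and v0: "v0 \<in> V" "{z. E v0 z} \<noteq> {}" "\<not> lf E v0"
    "\<forall>y. E v0 y \<longrightarrow> \<not> lf E y"
  shows "\<exists>S. S \<noteq> {} \<and> S \<subseteq> V \<and> certified_dominating V E (V - S)"
proof -
  define B where "B = {b\<in>V. {z. E b z} \<noteq> {} \<and> \<not> lf E b \<and> (\<forall>y. E b y \<longrightarrow> \<not> lf E y)}"
  define B2 where "B2 = {b\<in>B. \<exists>a c. a \<noteq> c \<and> a \<in> B \<and> c \<in> B \<and> E b a \<and> E b c}"
  define Ind where "Ind = {I. I \<subseteq> B2 \<and> (\<forall>x\<in>I. \<forall>y\<in>I. \<not> E x y)}"
  have BV: "B \<subseteq> V" unfolding B_def by blast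
  have B2B: "B2 \<subseteq> B" unfolding B2_def by blast
  have finB2: "finite B2" using finite_subset[OF subset_trans[OF B2B BV] g_fin[OF g]] .
  have finInd: "finite Ind"
    by (rule finite_subset[of _ "Pow B2"]) (use finB2 in \<open>auto simp: Ind_def\<close>)
  have "{} \<in> Ind" unfolding Ind_def by simp
  then obtain I where I: "I \<in> Ind" and Imax: "\<forall>J\<in>Ind. I \<subseteq> J \<longrightarrow> I = J"
    using finite_has_maximal[OF finInd] by blast
  have IB2: "I \<subseteq> B2" and Iind: "\<And>x y. x \<in> I \<Longrightarrow> y \<in> I \<Longrightarrow> \<not> E x y"
    using I unfolding Ind_def by blast+
  have Iext: "\<exists>i\<in>I. E b i" if b: "b \<in> B2" "b \<notin> I" for b
  proof (rule ccontr)
    assume n: "\<not> (\<exists>i\<in>I. E b i)"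
    have "insert b I \<in> Ind" unfolding Ind_def
      using IB2 Iind b n g_irr[OF g] g_sym[OF g] by blast
    then show False using Imax b by blast
  qed
  define T where "T = B - I"
  define S where "S = T \<union> {l. lf E l \<and> (\<exists>m. E l m \<and> \<not> lf E m \<and> (\<exists>t\<in>T. E m t))}"
  have TS: "T \<subseteq> S" unfolding S_def by blast
  have Bnl: "b \<in> B \<Longrightarrow> \<not> lf E b" for b unfolding B_def by blast
  have Bnbr: "b \<in> B \<Longrightarrow> E b y \<Longrightarrow> \<not> lf E y" for b y unfolding B_def by blast
  have v0B: "v0 \<in> B" unfolding B_def using v0 by blast
  have Tne: "T \<noteq> {}"
  proof (cases "v0 \<in> I")
    case False then show ?thesis using v0B unfolding T_def by blast
  next
    case True
    then have "v0 \<in> B2" using IB2 by blast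
    then obtain a where a: "a \<in> B" "E v0 a" unfolding B2_def by blast
    have "a \<notin> I" using Iind[OF True] a by blast
    then show ?thesis using a unfolding T_def by blast
  qed
  have SV: "S \<subseteq> V" unfolding S_def T_def using BV g_V1[OF g] by blast
  have A: "\<forall>s\<in>S. \<exists>u\<in>V - S. E s u"
  proof
    fix s assume s: "s \<in> S"
    show "\<exists>u\<in>V - S. E s u"
    proof (cases "s \<in> T")
      case True
      then have sB: "s \<in> B" "s \<notin> I" unfolding T_def by blast+
      show ?thesis
      proof (cases "s \<in> B2")
        case True
        then obtain i where i: "i \<in> I" "E s i" using Iext sB by blast
        have "i \<notin> S"
        proof
          assume "i \<in> S"
          moreover have "i \<notin> T" using i unfolding T_def by blast
          moreover have "\<not> lf E i" using Bnl i IB2 B2B by blast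
          ultimately show False unfolding S_def by blast
        qed
        then show ?thesis using i g_V2[OF g] by blast
      next
        case False
        have ne: "{z. E s z} \<noteq> {}" "\<not> lf E s" using sB unfolding B_def by blast+
        obtain a c where ac: "E s a" "E s c" "a \<noteq> c" using two_elems[OF ne] by blast
        have "\<exists>u. E s u \<and> u \<notin> B" using False sB(1) ac unfolding B2_def by blast
        then obtain u where u: "E s u" "u \<notin> B" by blast
        have "\<not> lf E u" using Bnbr[OF sB(1) u(1)] .
        then have "u \<notin> S" using u unfolding S_def T_def by blast
        then show ?thesis using u g_V2[OF g] by blast
      qed
    next
      case False
      then obtain m where m: "lf E s" "E s m" "\<not> lf E m" using s unfolding S_def by blast
      have "m \<notin> B" using Bnbr[of m s] g_sym[OF g m(2)] m(1) by blast
      then have "m \<notin> S" using m(3) unfolding S_def T_def by blast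
      then show ?thesis using m g_V2[OF g] by blast
    qed
  qed
  have Bc: "\<forall>u\<in>V - S. \<forall>x. {w\<in>S. E u w} \<noteq> {x}"
  proof (intro ballI allI notI)
    fix u x assume u: "u \<in> V - S" and eq: "{w\<in>S. E u w} = {x}"
    have xS: "x \<in> S" and ux: "E u x" using eq by blast+
    have xu: "\<And>w. w \<in> S \<Longrightarrow> E u w \<Longrightarrow> w = x" using eq by blast
    show False
    proof (cases "u \<in> B")
      case True
      then have "u \<in> I" using u TS unfolding T_def by blast
      then have "u \<in> B2" using IB2 by blast
      then obtain a c where ac: "a \<noteq> c" "a \<in> B" "c \<in> B" "E u a" "E u c" unfolding B2_def by blast
      have "a \<notin> I" "c \<notin> I" using Iind[OF \<open>u \<in> I\<close>] ac by blast+
      then have "a \<in> S" "c \<in> S" using ac TS unfolding T_def by blast+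
      then show False using xu ac by blast
    next
      case uB: False
      show False
      proof (cases "lf E u")
        case True
        have xl: "x \<notin> T" using Bnbr[of x u] g_sym[OF g ux] True unfolding T_def by blast
        then obtain m where m: "lf E x" "E x m" "\<not> lf E m" using xS unfolding S_def by blast
        have "{z. E x z} = {u}" using lf_nb[OF m(1) g_sym[OF g ux]] .
        then have "m = u" using m(2) by blast
        then show False using m(3) True by simp
      next
        case nl: False
        have uV: "u \<in> V" using u by blast
        have "{z. E u z} \<noteq> {}" using ux by blast
        then obtain l where l: "E u l" "lf E l" using uB uV nl unfolding B_def by blast
        show False
        proof (cases "x \<in> T")
          case True
          have "l \<in> S" unfolding S_def using l g_sym[OF g l(1)] nl ux True by blast
          then have "l = x" using xu l by blast
          then show False using True l(2) Bnl unfolding T_def by blast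
        next
          case False
          then obtain m t where m: "lf E x" "E x m" "\<not> lf E m" "t \<in> T" "E m t"
            using xS unfolding S_def by blast
          have "{z. E x z} = {u}" using lf_nb[OF m(1) g_sym[OF g ux]] .
          then have "m = u" using m(2) by blast
          then have "t = x" using xu m TS by blast
          then show False using False m(4) by simp
        qed
      qed
    qed
  qed
  have "S \<noteq> {}" using Tne TS by blast
  then show ?thesis using SV cert_compl[OF SV] A Bc by blast
qed



lemma P_corona:
  assumes g: "graph V E"
    and no2: "\<And>v a b. E v a \<Longrightarrow> E v b \<Longrightarrow> a \<noteq> b \<Longrightarrow> lf E a \<Longrightarrow> lf E b \<Longrightarrow> False"
    and hasl: "\<And>v. v \<in> V \<Longrightarrow> {z. E v z} \<noteq> {} \<Longrightarrow> \<not> lf E v \<Longrightarrow> \<exists>y. E v y \<and> lf E y"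
    and Cc: "C \<in> components V E" and c2: "card C \<ge> 2"
  shows "is_corona C (induced E C)"
proof -
  obtain v0 where v0: "v0 \<in> V" and Cdef: "C = {u. E\<^sup>*\<^sup>* v0 u}" using Cc unfolding components_def by blast
  have clos: "x \<in> C \<Longrightarrow> E x y \<Longrightarrow> y \<in> C" for x y unfolding Cdef by auto
  have conn: "E\<^sup>*\<^sup>* x z" if "x \<in> C" "z \<in> C" for x z
  proof -
    have "E\<^sup>*\<^sup>* x v0" using rtr_sym[OF g] that(1) unfolding Cdef by blast
    moreover have "E\<^sup>*\<^sup>* v0 z" using that(2) unfolding Cdef by blast
    ultimately show ?thesis by (rule rtranclp_trans)
  qed
  have CV: "C \<subseteq> V" unfolding Cdef using rtr_V[OF g _ v0] by blast
  have finC: "finite C" using CV g_fin[OF g] finite_subset by blast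
  have v0C: "v0 \<in> C" unfolding Cdef by simp
  have nbr: "\<exists>y. E x y" if x: "x \<in> C" for x
  proof -
    have "\<exists>z\<in>C. z \<noteq> x"
    proof (rule ccontr)
      assume "\<not> (\<exists>z\<in>C. z \<noteq> x)"
      then have "C \<subseteq> {x}" by blast
      then have "card C \<le> 1" using card_mono[of "{x}" C] by simp
      then show False using c2 by simp
    qed
    then obtain z where z: "z \<in> C" "z \<noteq> x" by blast
    have "E\<^sup>*\<^sup>* x z" using conn[OF x z(1)] .
    then show ?thesis using z(2) by (cases rule: converse_rtranclpE) auto
  qed
  have pair: "C \<subseteq> {x, y}" if p: "x \<in> C" "lf E x" "lf E y" "E x y" for x y
  proof
    fix z assume "z \<in> C"
    have Nx: "{w. E x w} = {y}" using lf_nb[OF p(2) p(4)] .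
    have Ny: "{w. E y w} = {x}" using lf_nb[OF p(3) g_sym[OF g p(4)]] .
    have "E\<^sup>*\<^sup>* x z" using conn[OF p(1) \<open>z \<in> C\<close>] .
    then show "z \<in> {x, y}"
    proof (induction rule: rtranclp_induct)
      case base then show ?case by simp
    next
      case (step a b)
      then show ?case using Nx Ny by blast
    qed
  qed
  show ?thesis
  proof (cases "\<exists>h\<in>C. \<not> lf E h")
    case True
    then obtain h0 where h0: "h0 \<in> C" "\<not> lf E h0" by blast
    define H where "H = {h\<in>C. \<not> lf E h}"
    define p where "p = (\<lambda>h. THE l. E h l \<and> lf E l)"
    have uniq: "E h (p h) \<and> lf E (p h)" "\<And>l. E h l \<Longrightarrow> lf E l \<Longrightarrow> l = p h" if h: "h \<in> H" for h
    proof -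
      have hC: "h \<in> C" "\<not> lf E h" using h unfolding H_def by blast+
      have "{z. E h z} \<noteq> {}" using nbr[OF hC(1)] by blast
      then obtain y where y: "E h y" "lf E y" using hasl CV hC by blast
      have ex1: "\<exists>!l. E h l \<and> lf E l" using y no2 by blast
      show "E h (p h) \<and> lf E (p h)" unfolding p_def using theI'[OF ex1] .
      fix l assume "E h l" "lf E l"
      then have "(THE l. E h l \<and> lf E l) = l" using the1_equality[OF ex1, of l] by blast
      then show "l = p h" unfolding p_def by simp
    qed
    have lnb: "y \<in> H" if x: "x \<in> C" "lf E x" "E x y" for x y
    proof (rule ccontr)
      assume "y \<notin> H"
      moreover have "y \<in> C" using clos x by blast
      ultimately have "lf E y" unfolding H_def by blast
      then have "C \<subseteq> {x,y}" using pair x by blast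
      then have "lf E h0" using h0 x \<open>lf E y\<close> by blast
      then show False using h0 by simp
    qed
    have HC: "H \<subseteq> C" unfolding H_def by blast
    have bij: "bij_betw p H (C - H)" unfolding bij_betw_def
    proof
      show "inj_on p H"
      proof (rule inj_onI)
        fix h1 h2 assume h: "h1 \<in> H" "h2 \<in> H" "p h1 = p h2"
        have e1: "E (p h1) h1" using uniq(1)[OF h(1)] g_sym[OF g] by blast
        have e2: "E (p h1) h2" using uniq(1)[OF h(2)] g_sym[OF g] h(3) by metis
        have "{z. E (p h1) z} = {h1}" using lf_nb[of E "p h1" h1] e1 uniq(1)[OF h(1)] by blast
        then show "h1 = h2" using e2 by (metis mem_Collect_eq singletonD)
      qed
      show "p ` H = C - H"
      proof
        show "p ` H \<subseteq> C - H"
        proof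
          fix l assume "l \<in> p ` H"
          then obtain h where h: "h \<in> H" "l = p h" by blast
          then have "l \<in> C" using uniq(1)[OF h(1)] clos HC by blast
          moreover have "l \<notin> H" using uniq(1)[OF h(1)] h unfolding H_def by blast
          ultimately show "l \<in> C - H" by blast
        qed
        show "C - H \<subseteq> p ` H"
        proof
          fix x assume x: "x \<in> C - H"
          then have xl: "lf E x" unfolding H_def by blast
          then obtain y where y: "{z. E x z} = {y}" unfolding lf_def by blast
          then have xy: "E x y" by blast
          have yH: "y \<in> H" using lnb x xl xy by blast
          have "x = p y" using uniq(2)[OF yH g_sym[OF g xy] xl] .
          then show "x \<in> p ` H" using yH by blast
        qed
      qed
    qed
    have cond: "\<forall>x \<in> C - H. \<forall>y. induced E C x y \<longleftrightarrow> (y \<in> H \<and> p y = x)"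
    proof (intro ballI allI iffI)
      fix x y assume x: "x \<in> C - H" and i: "induced E C x y"
      have xl: "lf E x" using x unfolding H_def by blast
      have xy: "E x y" using i unfolding induced_def by blast
      have yH: "y \<in> H" using lnb x xl xy by blast
      have "x = p y" using uniq(2)[OF yH g_sym[OF g xy] xl] .
      then show "y \<in> H \<and> p y = x" using yH by simp
    next
      fix x y assume x: "x \<in> C - H" and yp: "y \<in> H \<and> p y = x"
      have "E y x" using uniq(1)[of y] yp by blast
      then show "induced E C x y" unfolding induced_def using g_sym[OF g] x yp HC by blast
    qed
    show ?thesis unfolding is_corona_def using HC bij cond by blast
  next
    case False
    obtain w where w: "E v0 w" using nbr[OF v0C] by blast
    have wC: "w \<in> C" using clos[OF v0C w] .
    have l0: "lf E v0" "lf E w" using False v0C wC by blast+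
    have Ceq: "C = {v0, w}" using pair[OF v0C l0 w] v0C wC by blast
    have vw: "v0 \<noteq> w" using w g_irr[OF g] by blast
    have Nw: "{z. E w z} = {v0}" using lf_nb[OF l0(2) g_sym[OF g w]] .
    have CH: "C - {v0} = {w}" using Ceq vw by blast
    have bij: "bij_betw (\<lambda>_. w) {v0} (C - {v0})" unfolding CH by (simp add: bij_betw_def)
    have cond: "\<forall>x \<in> C - {v0}. \<forall>y. induced E C x y \<longleftrightarrow> (y \<in> {v0} \<and> w = x)"
      unfolding CH induced_def using Nw Ceq by auto
    show ?thesis unfolding is_corona_def using bij cond Ceq by blast
  qed
qed

theorem theorem3p2:
  fixes V :: "'a set" and E :: "'a \<Rightarrow> 'a \<Rightarrow> bool" and n :: nat
  assumes "graph V E" and "n = card V"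
  shows "((\<forall>C \<in> components V E. card C \<ge> 2 \<longrightarrow> is_corona C (induced E C))
            \<longleftrightarrow> gamma_cer V E = n)
       \<and> (gamma_cer V E = n \<longleftrightarrow> Gamma_cer V E = n)"
proof -
  note g = assms(1)
  define P where "P = (\<forall>D. certified_dominating V E D \<longrightarrow> D = V)"
  have c1: "(\<forall>C \<in> components V E. card C \<ge> 2 \<longrightarrow> is_corona C (induced E C)) \<longleftrightarrow> P"
  proof
    assume "\<forall>C \<in> components V E. card C \<ge> 2 \<longrightarrow> is_corona C (induced E C)"
    then show P unfolding P_def using corona_P[OF g] by blast
  next
    assume P: P
    have no2: False if "E v a" "E v b" "a \<noteq> b" "lf E a" "lf E b" for v a b
    proof -
      have "V - {a,b} = V" using P two_leaves[OF g that] unfolding P_def by blast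
      moreover have "a \<in> V" using g_V2[OF g that(1)] .
      ultimately show False by blast
    qed
    have hasl: "\<exists>y. E v y \<and> lf E y" if vv: "v \<in> V" "{z. E v z} \<noteq> {}" "\<not> lf E v" for v
    proof (rule ccontr)
      assume "\<not> (\<exists>y. E v y \<and> lf E y)"
      then have "\<forall>y. E v y \<longrightarrow> \<not> lf E y" by blast
      then obtain S where S: "S \<noteq> {}" "S \<subseteq> V" "certified_dominating V E (V - S)"
        using B_constr[OF g vv] \<open>\<forall>y. E v y \<longrightarrow> \<not> lf E y\<close> by blast
      then have "V - S = V" using P unfolding P_def by blast
      then show False using S by blast
    qed
    show "\<forall>C \<in> components V E. card C \<ge> 2 \<longrightarrow> is_corona C (induced E C)"
    proof (intro ballI impI)
      fix C assume C: "C \<in> components V E" "2 \<le> card C"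
      show "is_corona C (induced E C)"
      proof (rule P_corona[OF g _ _ C])
        fix v a b assume "E v a" "E v b" "a \<noteq> b" "lf E a" "lf E b"
        then show False by (rule no2)
      next
        fix v assume "v \<in> V" "{z. E v z} \<noteq> {}" "\<not> lf E v"
        then show "\<exists>y. E v y \<and> lf E y" by (rule hasl)
      qed
    qed
  qed
  show ?thesis using c1 gamma_iff[OF g] Gamma_iff[OF g] assms(2) unfolding P_def by simp
qed


end
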